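(* Let $c,d>0$ with $\frac{cd}{c+d}\le1$. Then $\frac12F\!\left(c,d;c+d;\frac12\right)<1$.
   Context: $F(a,b;c;x)$ is the Gaussian hypergeometric function $\sum_{n\ge0}\frac{(a)_n(b)_n}{(c)_n}\frac{x^n}{n!}$ ($|x|<1$), with $(a)_n=a(a+1)\cdots(a+n-1)$, $(a)_0=1$. *)

theory Defs
  imports "HOL-Analysis.Analysis"
begin

text \<open>Gaussian hypergeometric function F(a,b;c;x) = sum_n (a)_n (b)_n / (c)_n * x^n / n!,
  intended for |x| < 1 (where the series converges).\<close>
definition hyp2F1 :: "real \<Rightarrow> real \<Rightarrow> real \<Rightarrow> real \<Rightarrow> real" where
  "hyp2F1 a b c x = (\<Sum>n. pochhammer a n * pochhammer b n / pochhammer c n * x ^ n / fact n)"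

end

theory Submission
  imports Defs
begin

theorem mainTheorem7:
  fixes c d :: real
  assumes "c > 0" and "d > 0" and "c * d / (c + d) \<le> 1"
  shows "hyp2F1 c d (c + d) (1/2) / 2 < 1"
proof -
  define t where "t n = pochhammer c n * pochhammer d n / pochhammer (c + d) n * (1/2::real) ^ n / fact n" for n
  define r where "r n = (c + real n) * (d + real n) / ((c + d + real n) * (real n + 1) * 2)" for n
  have cd: "c * d \<le> c + d" using assms by (simp add: divide_le_eq)
  have rec: "t (Suc n) = t n * r n" for n
  proof -
    have "pochhammer (c+d) n > 0" using assms by (intro pochhammer_pos) auto
    moreover have "c + d + real n > 0" using assms by auto
    ultimately show ?thesis
      unfolding t_def r_def by (simp add: pochhammer_Suc field_simps)
  qed
  have rpos: "r n > 0" for n using assms unfolding r_def by (auto intro!: divide_pos_pos mult_pos_pos)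
  have rle: "r n \<le> 1/2" for n
  proof -
    have "(c + real n) * (d + real n) \<le> (c + d + real n) * (real n + 1)"
      using cd by (simp add: algebra_simps)
    moreover have "(c + d + real n) * (real n + 1) > 0" using assms by auto
    ultimately show ?thesis unfolding r_def by (simp add: divide_le_eq)
  qed
  have r1: "r 1 < 1/2"
  proof -
    have "(c + 1) * (d + 1) < (c + d + 1) * (1 + 1)"
      using cd by (simp add: algebra_simps)
    moreover have "(c + d + 1) * 2 > 0" using assms by auto
    ultimately show ?thesis unfolding r_def by (simp add: divide_less_eq)
  qed
  have tpos: "t n > 0" for n
  proof (induction n)
    case 0 then show ?case by (simp add: t_def)
  next
    case (Suc n) then show ?case using rpos[of n] by (simp add: rec)
  qed
  have tle: "t n \<le> (1/2)^n" for n
  proof (induction n)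
    case 0 then show ?case by (simp add: t_def)
  next
    case (Suc n)
    have "t n * r n \<le> (1/2)^n * (1/2)"
      using Suc tpos[of n] rpos[of n] rle[of n] by (intro mult_mono) auto
    then show ?case by (simp add: rec)
  qed
  have t2: "t 2 < (1/2)^2"
  proof -
    have "t 2 = t 1 * r 1" using rec[of 1] by (simp add: numeral_2_eq_2)
    also have "\<dots> < (1/2) * (1/2)"
      using tle[of 1] tpos[of 1] r1 rpos[of 1] by (intro mult_le_less_imp_less) auto
    finally show ?thesis by (simp add: power2_eq_square)
  qed
  have sg: "summable (\<lambda>n. (1/2::real)^n)" by (rule summable_geometric) simp
  have st: "summable t"
    by (rule summable_comparison_test[OF _ sg]) (use tle tpos in \<open>auto intro!: exI[of _ 0] simp: abs_of_pos\<close>)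
  have "0 < (\<Sum>n. (1/2::real)^n - t n)"
    using t2 tle by (subst suminf_pos_iff) (auto intro!: summable_diff sg st simp: algebra_simps)
  also have "\<dots> = 2 - suminf t"
    using suminf_diff[OF sg st] suminf_geometric[of "1/2::real"] by simp
  finally have "suminf t < 2" by simp
  moreover have "hyp2F1 c d (c + d) (1/2) = suminf t"
    unfolding hyp2F1_def t_def by simp
  ultimately show ?thesis by simp
qed

end
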